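(* Let $R>0$, let $I\subset\mathbb{R}$ be an open interval and let $x,y\colon I\to\mathbb{R}$ be continuously differentiable with $r(t):=\sqrt{x(t)^2+y(t)^2}>R$ and $|x(t)-t|<r(t)-R$ for all $t\in I$. Put $g(t)=\dfrac{x(t)-t}{r(t)-R}$. Then for each $t\in I$ the compatibility condition $$\frac{d}{dt}\left(y(t)+\sqrt{\big(r(t)-R\big)^2-(x(t)-t)^2}\right)=\frac{x(t)-t}{\sqrt{\big(r(t)-R\big)^2-(x(t)-t)^2}}$$ holds if and only if $$\left(g(t)-\frac{x(t)}{r(t)}\right)x'(t)=\left(\sqrt{1-g(t)^2}+\frac{y(t)}{r(t)}\right)y'(t).$$
   Context: In the paper this is applied to the equidistant parameterization $x,y$ of a circle of radius $R$ centered at the origin and the epigraph of a positive, twice continuously differentiable convex function $f$, for which $f(t)=y(t)+\sqrt{(r(t)-R)^2-(x(t)-t)^2}$ and $f'(t)=(x(t)-t)/\sqrt{(r(t)-R)^2-(x(t)-t)^2}$; the compatibility condition expresses that the derivative of the first expression equals the second. *)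

theory Defs
  imports "HOL-Analysis.Analysis"
begin

end

theory Submission
  imports Defs
begin

theorem theorem6:
  fixes R :: real and I :: "real set"
    and x y x' y' r g :: "real \<Rightarrow> real"
  assumes R_pos: "R > 0"
    and I_open: "open I" and I_interval: "is_interval I"
    and x_deriv: "\<And>t. t \<in> I \<Longrightarrow> (x has_real_derivative x' t) (at t)"
    and y_deriv: "\<And>t. t \<in> I \<Longrightarrow> (y has_real_derivative y' t) (at t)"
    and x'_cont: "continuous_on I x'"
    and y'_cont: "continuous_on I y'"
    and r_def: "r = (\<lambda>t. sqrt (x t ^ 2 + y t ^ 2))"
    and r_gt: "\<And>t. t \<in> I \<Longrightarrow> r t > R"
    and x_close: "\<And>t. t \<in> I \<Longrightarrow> \<bar>x t - t\<bar> < r t - R"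
    and g_def: "g = (\<lambda>t. (x t - t) / (r t - R))"
    and t_in: "t \<in> I"
  shows "deriv (\<lambda>s. y s + sqrt ((r s - R) ^ 2 - (x s - s) ^ 2)) t
           = (x t - t) / sqrt ((r t - R) ^ 2 - (x t - t) ^ 2)
         \<longleftrightarrow> (g t - x t / r t) * x' t = (sqrt (1 - g t ^ 2) + y t / r t) * y' t"
proof -
  define a where "a = r t - R"
  define b where "b = x t - t"
  define Q where "Q = a^2 - b^2"
  define S where "S = sqrt Q"
  define rp where "rp = (x t * x' t + y t * y' t) / r t"
  have a_pos: "a > 0" using r_gt[OF t_in] a_def by simp
  have ab: "\<bar>b\<bar> < a" using x_close[OF t_in] a_def b_def by simp
  have Qpos: "Q > 0"
  proof -
    have "b^2 < a^2" using ab a_pos by (metis abs_of_pos power_strict_mono power2_abs zero_le_numeral abs_ge_zero zero_less_numeral pos2)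
    then show ?thesis by (simp add: Q_def)
  qed
  have Spos: "S > 0" using Qpos S_def by simp
  have rpos: "r t > 0" using r_gt[OF t_in] R_pos by simp
  have sumpos: "x t ^ 2 + y t ^ 2 > 0" using rpos r_def by simp
  have dsum: "((\<lambda>s. x s ^ 2 + y s ^ 2) has_real_derivative (2 * x t * x' t + 2 * y t * y' t)) (at t)"
    by (auto intro!: derivative_eq_intros x_deriv[OF t_in] y_deriv[OF t_in])
  have dr0: "((\<lambda>s. sqrt (x s ^ 2 + y s ^ 2)) has_real_derivative
       (inverse (sqrt (x t ^ 2 + y t ^ 2)) / 2) * (2 * x t * x' t + 2 * y t * y' t)) (at t)"
    by (rule DERIV_chain2[OF DERIV_real_sqrt[OF sumpos] dsum])
  have dr: "(r has_real_derivative rp) (at t)"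
  proof -
    have e: "inverse q / 2 * (2 * u + 2 * v) = (u + v) / q" for q u v :: real
      by (cases "q = 0") (simp_all add: field_simps)
    have eq: "(inverse (sqrt (x t ^ 2 + y t ^ 2)) / 2) * (2 * x t * x' t + 2 * y t * y' t) = rp"
      unfolding rp_def r_def using e[of "sqrt (x t ^ 2 + y t ^ 2)" "x t * x' t" "y t * y' t"]
      by (simp only: mult.assoc)
    show ?thesis using dr0 unfolding eq r_def .
  qed
  have dQ: "((\<lambda>s. (r s - R) ^ 2 - (x s - s) ^ 2) has_real_derivative
             (2 * a * rp - 2 * b * (x' t - 1))) (at t)"
    apply (rule derivative_eq_intros refl dr x_deriv[OF t_in])+
    by (simp add: a_def b_def algebra_simps)
  have dsq: "((\<lambda>s. sqrt ((r s - R) ^ 2 - (x s - s) ^ 2)) has_real_derivative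
       (inverse (sqrt Q) / 2) * (2 * a * rp - 2 * b * (x' t - 1))) (at t)"
  proof -
    have Qt: "(r t - R) ^ 2 - (x t - t) ^ 2 = Q" by (simp add: Q_def a_def b_def)
    have Qp: "0 < (r t - R) ^ 2 - (x t - t) ^ 2" using Qpos Qt by simp
    show ?thesis using DERIV_chain2[OF DERIV_real_sqrt[OF Qp] dQ] unfolding Qt .
  qed
  have eq2: "(inverse (sqrt Q) / 2) * (2 * a * rp - 2 * b * (x' t - 1))
        = (2 * a * rp - 2 * b * (x' t - 1)) / (2 * S)"
  proof -
    have e2: "inverse q / 2 * E = E / (2 * q)" for q E :: real
      by (cases "q = 0") (simp_all add: field_simps)
    show ?thesis unfolding S_def by (rule e2)
  qed
  have dall: "((\<lambda>s. y s + sqrt ((r s - R) ^ 2 - (x s - s) ^ 2)) has_real_derivative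
             (y' t + (2 * a * rp - 2 * b * (x' t - 1)) / (2 * S))) (at t)"
    using DERIV_add[OF y_deriv[OF t_in] dsq] unfolding eq2 .
  have D: "deriv (\<lambda>s. y s + sqrt ((r s - R) ^ 2 - (x s - s) ^ 2)) t
          = y' t + (2 * a * rp - 2 * b * (x' t - 1)) / (2 * S)"
    using dall DERIV_imp_deriv by blast
  have gt: "g t = b / a" using g_def a_def b_def by simp
  have sq: "sqrt (1 - g t ^ 2) = S / a"
  proof -
    have "1 - g t ^ 2 = Q / a^2" unfolding gt Q_def using a_pos by (simp add: field_simps power_divide)
    then show ?thesis using a_pos by (simp add: S_def real_sqrt_divide)
  qed
  have bt: "x t - t = b" by (simp add: b_def)
  have St: "sqrt ((r t - R) ^ 2 - (x t - t) ^ 2) = S" by (simp add: S_def Q_def a_def b_def)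
  have Snz: "S \<noteq> 0" using Spos by simp
  have anz: "a \<noteq> 0" using a_pos by simp
  have rnz: "r t \<noteq> 0" using rpos by simp
  have stepA: "y' t + (2 * a * rp - 2 * b * (x' t - 1)) / (2 * S) = (y' t * S + a * rp - b * x' t + b) / S"
    using Snz by (simp add: field_simps)
  have "deriv (\<lambda>s. y s + sqrt ((r s - R) ^ 2 - (x s - s) ^ 2)) t
           = (x t - t) / sqrt ((r t - R) ^ 2 - (x t - t) ^ 2)
        \<longleftrightarrow> (y' t * S + a * rp - b * x' t + b) / S = b / S"
    unfolding D unfolding St unfolding bt unfolding stepA ..
  also have "\<dots> \<longleftrightarrow> y' t * S + a * rp - b * x' t + b = b"
    using Snz by (simp add: divide_cancel_right)
  also have "\<dots> \<longleftrightarrow> y' t * S + a * rp - b * x' t = 0" by linarith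
  also have "\<dots> \<longleftrightarrow> (y' t * S + a * rp - b * x' t) / a = 0" using anz by simp
  also have "(y' t * S + a * rp - b * x' t) / a = y' t * (S / a) + rp - (b / a) * x' t"
    using anz by (simp add: field_simps)
  also have "rp = x t / r t * x' t + y t / r t * y' t"
    unfolding rp_def by (simp add: add_divide_distrib)
  also have "(y' t * (S / a) + (x t / r t * x' t + y t / r t * y' t) - b / a * x' t = 0)
      \<longleftrightarrow> (b / a - x t / r t) * x' t = (S / a + y t / r t) * y' t"
    by (simp add: algebra_simps) (auto simp: algebra_simps)
  also have "\<dots> \<longleftrightarrow> (g t - x t / r t) * x' t = (sqrt (1 - g t ^ 2) + y t / r t) * y' t"
    unfolding sq unfolding gt ..
  finally show ?thesis .
qed

end
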